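(* Let $A\in\mathbb{R}^{N\times N}$, $b^{ex},e\in\mathbb{R}^N$ with $e\ne0$, $b=b^{ex}+e$, and let $m\ge1$ be such that $A^kb\ne0$ and $A^kb^{ex}\ne0$ for $0\le k\le m$. Define \[ \widetilde V_{m+1}=\left[\frac{b}{\|b\|},\frac{Ab}{\|Ab\|},\dots,\frac{A^{m}b}{\|A^{m}b\|}\right],\quad \widetilde V_{m+1}^{ex}=\left[\frac{b^{ex}}{\|b^{ex}\|},\frac{Ab^{ex}}{\|Ab^{ex}\|},\dots,\frac{A^{m}b^{ex}}{\|A^{m}b^{ex}\|}\right]. \] Let $r_m$ and $r_m^{ex}$ be the $m$-th GMRES residuals for $Ax=b$ and $Ax=b^{ex}$ respectively, and let $s^{ex}\in\mathbb{R}^{m+1}$ with first component $s^{ex}_1=0$ be such that $\|r_m^{ex}\|=\|b^{ex}-\widetilde V_{m+1}^{ex}s^{ex}\|$. Then \[ \|r_m\|\le\eta(m)\|e\|,\qquad \eta(m)=1+\frac{\|r_m^{ex}\|+\|(\widetilde V_{m+1}-\widetilde V_{m+1}^{ex})s^{ex}\|}{\|e\|}. \]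
   Context: GMRES with zero initial guess: the $m$-th residual $r_m=b-Ax_m$, where $x_m$ minimizes $\|b-Ax\|$ over $x\in\mathrm{span}\{b,Ab,\dots,A^{m-1}b\}$; equivalently $\|r_m\|=\min_{s\in\mathbb{R}^{m+1},\,s_1=0}\|b-\widetilde V_{m+1}s\|$, and analogously for $b^{ex}$ with $\widetilde V^{ex}_{m+1}$. Norms are Euclidean. *)

theory Defs
  imports "HOL-Analysis.Analysis"
begin

definition krylov_vec :: "real^'n^'n \<Rightarrow> nat \<Rightarrow> real^'n \<Rightarrow> real^'n" where
  "krylov_vec A k v = (((*v) A) ^^ k) v"

definition krylov_space :: "real^'n^'n \<Rightarrow> real^'n \<Rightarrow> nat \<Rightarrow> (real^'n) set" where
  "krylov_space A v m = span {krylov_vec A k v | k. k < m}"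

text \<open>Norm of the m-th GMRES residual (zero initial guess):
  min over x in the Krylov space of norm(v - A x).\<close>
definition gmres_res_norm :: "real^'n^'n \<Rightarrow> real^'n \<Rightarrow> nat \<Rightarrow> real" where
  "gmres_res_norm A v m = Inf {norm (v - A *v x) | x. x \<in> krylov_space A v m}"

text \<open>Product of the normalized Krylov matrix
  [v/|v|, Av/|Av|, ..., A^m v/|A^m v|] with a coefficient vector s
  (entries s 0, ..., s m; s 0 is the paper's s_1).\<close>
definition Vtilde_mult :: "real^'n^'n \<Rightarrow> real^'n \<Rightarrow> nat \<Rightarrow> (nat \<Rightarrow> real) \<Rightarrow> real^'n" where
  "Vtilde_mult A v m s = (\<Sum>k\<le>m. s k *\<^sub>R (krylov_vec A k v /\<^sub>R norm (krylov_vec A k v)))"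

end

theory Submission
  imports Defs
begin

lemma kv_Suc: "krylov_vec A (Suc j) v = A *v krylov_vec A j v"
  by (simp add: krylov_vec_def)

lemma Vt_in:
  assumes "s 0 = 0" "m \<ge> 1"
  shows "\<exists>x \<in> krylov_space A v m. Vtilde_mult A v m s = A *v x"
proof -
  obtain m' where m: "m = Suc m'" using assms(2) by (cases m) auto
  define c where "c j = s (Suc j) / norm (krylov_vec A (Suc j) v)" for j
  define x where "x = (\<Sum>j\<le>m'. c j *\<^sub>R krylov_vec A j v)"
  have "x \<in> krylov_space A v m"
    unfolding x_def krylov_space_def
    by (intro span_sum span_mul span_base) (auto simp: m)
  moreover have "Vtilde_mult A v m s = A *v x"
  proof -
    have "Vtilde_mult A v m s = (\<Sum>j\<le>m'. s (Suc j) *\<^sub>R (krylov_vec A (Suc j) v /\<^sub>R norm (krylov_vec A (Suc j) v)))"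
      unfolding Vtilde_mult_def m by (simp only: sum.atMost_Suc_shift assms(1)) simp
    also have "\<dots> = (\<Sum>j\<le>m'. c j *\<^sub>R (A *v krylov_vec A j v))"
      by (simp add: c_def kv_Suc divide_inverse)
    also have "\<dots> = A *v x"
      unfolding x_def by (simp add: linear_sum[OF matrix_vector_mul_linear] matrix_vector_mult_scaleR
)
    finally show ?thesis .
  qed
  ultimately show ?thesis by blast
qed

theorem proposition2:
  fixes A :: "real^'n^'n" and bex e :: "real^'n" and m :: nat and sex :: "nat \<Rightarrow> real"
  assumes "e \<noteq> 0"
    and "m \<ge> 1"
    and "\<forall>k\<le>m. krylov_vec A k (bex + e) \<noteq> 0"
    and "\<forall>k\<le>m. krylov_vec A k bex \<noteq> 0"
    and "sex 0 = 0"
    and "gmres_res_norm A bex m = norm (bex - Vtilde_mult A bex m sex)"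
  shows "gmres_res_norm A (bex + e) m \<le>
    (1 + (gmres_res_norm A bex m
          + norm (Vtilde_mult A (bex + e) m sex - Vtilde_mult A bex m sex)) / norm e) * norm e"
proof -
  let ?b = "bex + e"
  obtain x where x: "x \<in> krylov_space A ?b m" "Vtilde_mult A ?b m sex = A *v x"
    using Vt_in[of sex m A ?b] assms(5,2) by blast
  have "gmres_res_norm A ?b m \<le> norm (?b - A *v x)"
    unfolding gmres_res_norm_def
    by (rule cInf_lower) (use x(1) in \<open>auto intro: bdd_belowI[where m=0]\<close>)
  also have "?b - A *v x = (bex - Vtilde_mult A bex m sex) + e
      - (Vtilde_mult A ?b m sex - Vtilde_mult A bex m sex)"
    using x(2) by (simp add: algebra_simps)
  also have "norm \<dots> \<le> norm (bex - Vtilde_mult A bex m sex) + norm e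
      + norm (Vtilde_mult A ?b m sex - Vtilde_mult A bex m sex)"
    by (meson norm_triangle_ineq norm_triangle_ineq4 add_right_mono order_trans)
  also have "\<dots> = (1 + (gmres_res_norm A bex m
          + norm (Vtilde_mult A ?b m sex - Vtilde_mult A bex m sex)) / norm e) * norm e"
    using assms(1,6) by (simp add: field_simps)
  finally show ?thesis .
qed

end
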